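(* Let $(v_\alpha(x))_{\alpha\in A}$ be a collection of real-analytic $\mathbb C^K$-valued functions on a neighborhood of $0$ in $\mathbb R^m$. If the dimension of $\operatorname{span}_\mathbb C\{v_\alpha(x):\alpha\in A\}$ is not constant for $x$ in any neighborhood of $0$, then there exists an integer $\kappa>1$ such that, for any other collection $(v'_\alpha(x))_{\alpha\in A}$ of real-analytic $\mathbb C^K$-valued functions on some neighborhood of $0$ with $v'_\alpha(x)=v_\alpha(x)+O(|x|^\kappa)$ for every $\alpha\in A$, the dimension of $\operatorname{span}_\mathbb C\{v'_\alpha(x):\alpha\in A\}$ is also not constant in any neighborhood of $0$. *)

theory Defs
  imports "HOL-Analysis.Analysis"
begin

text \<open>Real-analyticity of a map from R^m (= real^'m) to C^K (= complex^'k):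
  near every point it is the sum of an (unconditionally, i.e. absolutely) convergent
  power series in the m real coordinates, indexed by multi-indices 'm \<Rightarrow> nat.\<close>

definition real_analytic_at :: "(real^'m \<Rightarrow> complex^'k) \<Rightarrow> real^'m \<Rightarrow> bool" where
  "real_analytic_at f x0 \<longleftrightarrow>
     (\<exists>r>0. \<exists>c :: ('m \<Rightarrow> nat) \<Rightarrow> complex^'k.
        \<forall>x\<in>ball x0 r.
          ((\<lambda>\<alpha>. (\<Prod>i\<in>UNIV. (x$i - x0$i) ^ (\<alpha> i)) *\<^sub>R c \<alpha>) has_sum f x) UNIV)"

definition real_analytic_on :: "(real^'m \<Rightarrow> complex^'k) \<Rightarrow> (real^'m) set \<Rightarrow> bool" where
  "real_analytic_on f U \<longleftrightarrow> (\<forall>x\<in>U. real_analytic_at f x)"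

definition span_dim :: "('a \<Rightarrow> real^'m \<Rightarrow> complex^'k) \<Rightarrow> 'a set \<Rightarrow> real^'m \<Rightarrow> nat" where
  "span_dim v A x = vec.dim (vec.span ((\<lambda>\<alpha>. v \<alpha> x) ` A))"

definition dim_nonconstant_near_0 :: "('a \<Rightarrow> real^'m \<Rightarrow> complex^'k) \<Rightarrow> 'a set \<Rightarrow> (real^'m) set \<Rightarrow> bool" where
  "dim_nonconstant_near_0 v A D \<longleftrightarrow>
     (\<forall>U. open U \<longrightarrow> 0 \<in> U \<longrightarrow> U \<subseteq> D \<longrightarrow> (\<exists>x\<in>U. \<exists>y\<in>U. span_dim v A x \<noteq> span_dim v A y))"

end

theory Submission
  imports Defs "HOL-Complex_Analysis.Complex_Analysis"
begin

lemma det_nz_ker: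
  fixes A :: "'a::field^'n^'n"
  shows "det A \<noteq> 0 \<longleftrightarrow> (\<forall>c. A *v c = 0 \<longrightarrow> c = 0)"
proof -
  have lin: "Vector_Spaces.linear (*s) (*s) ((*v) A)" by simp
  have "det A \<noteq> 0 \<longleftrightarrow> inj ((*v) A)"
    using det_nz_iff_inj_gen[OF lin] by simp
  also have "\<dots> \<longleftrightarrow> (\<forall>c. A *v c = 0 \<longrightarrow> c = 0)"
    using vec.linear_inj_iff_eq_0[OF lin] by auto
  finally show ?thesis .
qed

lemma sum_delta_mult:
  fixes f :: "'k::finite \<Rightarrow> 'b::comm_ring_1"
  shows "(\<Sum>j\<in>UNIV. (if k = j then 1 else 0) * f j) = f k"
proof -
  have "(\<Sum>j\<in>UNIV. (if k = j then 1 else 0) * f j) = (\<Sum>j\<in>UNIV. if k = j then f j else 0)"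
    by (rule sum.cong) auto
  then show ?thesis by simp
qed

definition gmat :: "'k set \<Rightarrow> ('k \<Rightarrow> complex^'k) \<Rightarrow> ('k \<Rightarrow> complex^'k) \<Rightarrow> complex^'k^'k" where
  "gmat I W U = (\<chi> k l. if k \<in> I \<and> l \<in> I then (\<Sum>j\<in>UNIV. cnj (W k $ j) * (U l $ j))
                         else if k = l then 1 else 0)"

lemma gmat_mult:
  fixes c :: "'k::finite \<Rightarrow> complex"
  shows "(gmat I W U *v (\<chi> l. if l \<in> I then c l else 0)) $ k =
     (if k \<in> I then (\<Sum>j\<in>UNIV. cnj (W k $ j) * ((\<Sum>l\<in>I. c l *s U l) $ j)) else 0)"
proof (cases "k \<in> I")
  define cv where "cv = (\<chi> l. if l \<in> I then c l else 0)"
  case True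
  have "(gmat I W U *v cv) $ k = (\<Sum>l\<in>UNIV. (if l \<in> I then (\<Sum>j\<in>UNIV. cnj (W k $ j) * (U l $ j)) * c l else 0))"
    unfolding matrix_vector_mult_def gmat_def cv_def using True by (auto intro!: sum.cong)
  also have "\<dots> = (\<Sum>l\<in>I. (\<Sum>j\<in>UNIV. cnj (W k $ j) * (U l $ j)) * c l)"
    by (simp add: sum.If_cases)
  also have "\<dots> = (\<Sum>j\<in>UNIV. cnj (W k $ j) * ((\<Sum>l\<in>I. c l *s U l) $ j))"
    by (simp add: sum_distrib_left sum_distrib_right sum_component sum.swap[of _ I] mult_ac)
  finally show ?thesis using True by (simp add: cv_def)
next
  define cv where "cv = (\<chi> l. if l \<in> I then c l else 0)"
  case False
  have "(gmat I W U *v cv) $ k = cv $ k"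
    unfolding matrix_vector_mult_def gmat_def using False by (simp add: sum_delta_mult)
  also have "\<dots> = 0" using False by (simp add: cv_def)
  finally show ?thesis using False by (simp add: cv_def)
qed

lemma gmat_out:
  fixes c :: "complex^'k::finite"
  assumes "k \<notin> I"
  shows "(gmat I W U *v c) $ k = c $ k"
proof -
  show ?thesis
    unfolding matrix_vector_mult_def gmat_def using assms by (simp add: sum_delta_mult)
qed

lemma gmat_ker:
  fixes U :: "'k::finite \<Rightarrow> complex^'k"
  assumes "det (gmat I W U) \<noteq> 0" "(\<Sum>l\<in>I. c l *s U l) = 0" "l \<in> I"
  shows "c l = 0"
proof -
  define cv where "cv = (\<chi> l. if l \<in> I then c l else 0)"
  have "(gmat I W U *v cv) $ k = 0" for k
    using gmat_mult[of I W U c k] unfolding assms(2) cv_def[symmetric] by simp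
  then have "gmat I W U *v cv = 0" by (simp add: vec_eq_iff)
  then have "cv = 0" using assms(1) det_nz_ker by blast
  then show ?thesis using assms(3) by (simp add: cv_def vec_eq_iff) (metis (mono_tags))
qed

lemma gmat_indep:
  fixes U :: "'k::finite \<Rightarrow> complex^'k"
  assumes "det (gmat I W U) \<noteq> 0"
  shows "inj_on U I \<and> vec.independent (U ` I)"
proof
  show inj: "inj_on U I"
  proof (rule inj_onI, rule ccontr)
    fix a b assume ab: "a \<in> I" "b \<in> I" "U a = U b" "a \<noteq> b"
    define c where "c = (\<lambda>l. if l = a then (1::complex) else if l = b then -1 else 0)"
    have "(\<Sum>l\<in>I. c l *s U l) = (\<Sum>l\<in>{a,b}. c l *s U l)"
      by (rule sum.mono_neutral_right) (use ab in \<open>auto simp: c_def\<close>)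
    also have "\<dots> = 0" using ab by (simp add: c_def)
    finally have "c a = 0" using gmat_ker[OF assms] ab(1) by blast
    then show False by (simp add: c_def)
  qed
  show "vec.independent (U ` I)"
    unfolding vec.independent_explicit
  proof (intro conjI allI impI ballI)
    show "finite (U ` I)" by simp
    fix c :: "complex^'k \<Rightarrow> complex" and v assume s: "(\<Sum>v\<in>U ` I. c v *s v) = 0" and v: "v \<in> U ` I"
    have "(\<Sum>l\<in>I. c (U l) *s U l) = 0" using s by (simp add: sum.reindex[OF inj])
    then show "c v = 0" using v gmat_ker[OF assms, of "\<lambda>l. c (U l)"] by auto
  qed
qed

lemma gmat_self:
  fixes W :: "'k::finite \<Rightarrow> complex^'k"
  assumes "inj_on W I" "vec.independent (W ` I)"
  shows "det (gmat I W W) \<noteq> 0"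
proof -
  have "c = 0" if "gmat I W W *v c = 0" for c
  proof -
    define d where "d = (\<lambda>l. c $ l)"
    have cI: "c $ k = 0" if "k \<notin> I" for k
      using that \<open>gmat I W W *v c = 0\<close> gmat_out[of k I W W c] by simp
    have cv: "c = (\<chi> l. if l \<in> I then d l else 0)" using cI by (auto simp: vec_eq_iff d_def)
    define u where "u = (\<Sum>l\<in>I. d l *s W l)"
    have 0: "(\<Sum>j\<in>UNIV. cnj (W k $ j) * (u $ j)) = 0" if "k \<in> I" for k
      using gmat_mult[of I W W d k] that \<open>gmat I W W *v c = 0\<close> unfolding cv[symmetric] u_def by simp
    have cu: "cnj (u $ j) = (\<Sum>k\<in>I. cnj (d k) * cnj (W k $ j))" for j
      unfolding u_def by (simp add: sum_component cnj_sum)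
    have "(\<Sum>j\<in>UNIV. cnj (u $ j) * (u $ j)) = (\<Sum>j\<in>UNIV. \<Sum>k\<in>I. cnj (d k) * cnj (W k $ j) * (u $ j))"
      unfolding cu by (simp add: sum_distrib_right)
    also have "\<dots> = (\<Sum>k\<in>I. \<Sum>j\<in>UNIV. cnj (d k) * (cnj (W k $ j) * (u $ j)))"
      by (subst sum.swap) (simp add: mult.assoc)
    also have "\<dots> = (\<Sum>k\<in>I. cnj (d k) * (\<Sum>j\<in>UNIV. cnj (W k $ j) * (u $ j)))"
      by (simp add: sum_distrib_left)
    finally have "(\<Sum>j\<in>UNIV. cnj (u $ j) * (u $ j)) = (\<Sum>k\<in>I. cnj (d k) * (\<Sum>j\<in>UNIV. cnj (W k $ j) * (u $ j)))" .
    also have "\<dots> = 0" using 0 by simp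
    finally have "(\<Sum>j\<in>UNIV. cnj (u $ j) * (u $ j)) = 0" .
    moreover have eqj: "complex_of_real ((cmod (u $ j))^2) = cnj (u $ j) * (u $ j)" for j
      by (metis complex_norm_square mult.commute)
    ultimately have "(\<Sum>j\<in>UNIV. complex_of_real ((cmod (u $ j))^2)) = 0"
      by (metis (no_types, lifting) sum.cong eqj)
    then have "(\<Sum>j\<in>UNIV. (cmod (u $ j))^2) = 0"
      by (metis of_real_0 of_real_eq_iff of_real_sum)
    then have "\<forall>j. cmod (u $ j) ^ 2 = 0"
      using sum_nonneg_eq_0_iff[of UNIV "\<lambda>j. (cmod (u $ j))^2"] by auto
    then have u0: "u = 0" by (simp add: vec_eq_iff)
    have "d l = 0" if "l \<in> I" for l
    proof -
      have "(\<Sum>v\<in>W ` I. (\<lambda>w. d (the_inv_into I W w)) v *s v) = u"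
        unfolding u_def by (simp add: sum.reindex[OF assms(1)] the_inv_into_f_f[OF assms(1)])
      then have s0: "(\<Sum>v\<in>W ` I. d (the_inv_into I W v) *s v) = 0" using u0 by simp
      have H: "\<forall>c. (\<Sum>v\<in>W ` I. c v *s v) = 0 \<longrightarrow> (\<forall>v\<in>W ` I. c v = 0)"
        using assms(2) unfolding vec.independent_explicit by blast
      have "d (the_inv_into I W (W l)) = 0" using H[rule_format, OF s0] that by blast
      then show ?thesis using the_inv_into_f_f[OF assms(1) that] by simp
    qed
    then show "c = 0" using cv by (simp add: vec_eq_iff)
  qed
  then show ?thesis using det_nz_ker by blast
qed

lemma summable_norm_vec:
  fixes g :: "'b \<Rightarrow> complex^'k::finite"
  assumes "g summable_on A"
  shows "(\<lambda>x. norm (g x)) summable_on A"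
proof -
  have sj: "(\<lambda>x. g x $ j) summable_on A" for j
    using summable_on_bounded_linear[OF bounded_linear_vec_nth assms] by simp
  have "(\<lambda>x. norm (g x $ j)) summable_on A" for j
    using summable_on_iff_abs_summable_on_complex[of "\<lambda>x. g x $ j" A] sj[of j] by simp
  then have "(\<lambda>x. \<Sum>j\<in>J. norm (g x $ j)) summable_on A" for J :: "'k set"
    by (induction J rule: infinite_finite_induct) (auto intro: summable_on_add)
  then have "(\<lambda>x. \<Sum>j\<in>UNIV. norm (g x $ j)) summable_on A" by blast
  then show ?thesis
    by (rule summable_on_comparison_test) (auto simp: norm_vec_def L2_set_le_sum)
qed

definition deg :: "('m::finite \<Rightarrow> nat) \<Rightarrow> nat" where
  "deg \<beta> = (\<Sum>i\<in>UNIV. \<beta> i)"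

lemma finite_deg: "finite {\<beta>::'m::finite \<Rightarrow> nat. deg \<beta> = n}"
proof (rule finite_subset)
  show "{\<beta>::'m \<Rightarrow> nat. deg \<beta> = n} \<subseteq> Pi\<^sub>E UNIV (\<lambda>_. {..n})"
  proof
    fix \<beta> :: "'m \<Rightarrow> nat" assume "\<beta> \<in> {\<beta>. deg \<beta> = n}"
    then have "\<beta> i \<le> n" for i
      unfolding deg_def using member_le_sum[of i UNIV \<beta>] by auto
    then show "\<beta> \<in> Pi\<^sub>E UNIV (\<lambda>_. {..n})" by (auto simp: PiE_UNIV_domain)
  qed
  show "finite (Pi\<^sub>E (UNIV::'m set) (\<lambda>_. {..n}))" by (rule finite_PiE) auto
qed

lemma has_sum_regroup:
  fixes g :: "('m::finite \<Rightarrow> nat) \<Rightarrow> 'b::{topological_comm_monoid_add,t3_space}"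
  assumes "(g has_sum S) UNIV"
  shows "((\<lambda>n. \<Sum>\<beta>\<in>{\<beta>. deg \<beta> = n}. g \<beta>) has_sum S) UNIV"
proof -
  have "((\<lambda>p. g (snd p)) has_sum S) (Sigma UNIV (\<lambda>n. {\<beta>. deg \<beta> = n}))"
    using assms
    by (subst has_sum_reindex_bij_witness[where j = "\<lambda>p. snd p" and i = "\<lambda>\<beta>. (deg \<beta>, \<beta>)" and g = "\<lambda>p. g (snd p)" and h = g and s' = S]) auto
  then show ?thesis
    by (rule has_sum_SigmaD) (simp add: finite_deg)
qed

definition mnm :: "real^'m::finite \<Rightarrow> ('m \<Rightarrow> nat) \<Rightarrow> real" where
  "mnm x \<beta> = (\<Prod>i\<in>UNIV. (x$i) ^ (\<beta> i))"

lemma mnm_scale: "mnm (s *\<^sub>R y) \<beta> = s ^ deg \<beta> * mnm y \<beta>"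
  by (simp add: mnm_def deg_def power_mult_distrib prod.distrib power_sum)

lemma abs_mono: "\<bar>mnm y \<beta>\<bar> = mnm (\<chi> i. \<bar>y$i\<bar>) \<beta>"
  by (simp add: mnm_def abs_prod power_abs)

lemma powser_holo:
  fixes a :: "nat \<Rightarrow> complex"
  assumes "ereal R \<le> conv_radius a"
  shows "(\<lambda>z. \<Sum>n. a n * (z - c)^n) holomorphic_on ball c R"
proof (subst holomorphic_on_open[OF open_ball], intro ballI)
  fix z assume "z \<in> ball c R"
  then have "norm (z - c) < R" by (simp add: dist_norm norm_minus_commute)
  then have "ereal (norm (z - c)) < ereal R" by simp
  then have "ereal (norm (z - c)) < conv_radius a"
    using assms by (rule less_le_trans)
  from has_field_derivative_powser[OF this]
  have d1: "((\<lambda>w. \<Sum>n. a n * w^n) has_field_derivative (\<Sum>n. diffs a n * (z - c)^n)) (at (z - c))" .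
  have d2: "((\<lambda>w. w - c) has_field_derivative 1) (at z)"
    by (auto intro!: derivative_eq_intros)
  show "\<exists>f'. ((\<lambda>z. \<Sum>n. a n * (z - c)^n) has_field_derivative f') (at z)"
    using DERIV_chain2[OF d1 d2] by blast
qed

lemma ray_holo:
  fixes f :: "real^'m::finite \<Rightarrow> complex^'k::finite" and x1 :: "real^'m"
  assumes "real_analytic_at f (t0 *\<^sub>R x1)"
  shows "\<exists>R>0. \<exists>F::complex \<Rightarrow> complex^'k. (\<forall>j. (\<lambda>z. F z $ j) holomorphic_on ball (of_real t0) R) \<and>
           (\<forall>t. \<bar>t - t0\<bar> < R \<longrightarrow> F (of_real t) = f (t *\<^sub>R x1))"
proof (cases "x1 = 0")
  case True
  then show ?thesis
    by (intro exI[of _ 1] conjI exI[of _ "\<lambda>z. f 0"]) auto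
next
  case False
  obtain r and c :: "('m \<Rightarrow> nat) \<Rightarrow> complex^'k" where r: "r > 0" and
    hs: "\<And>x. x \<in> ball (t0 *\<^sub>R x1) r \<Longrightarrow>
          ((\<lambda>\<alpha>. (\<Prod>i\<in>UNIV. (x$i - (t0 *\<^sub>R x1)$i) ^ (\<alpha> i)) *\<^sub>R c \<alpha>) has_sum f x) UNIV"
    using assms unfolding real_analytic_at_def by blast
  define R where "R = r / norm x1"
  have R: "R > 0" using r False by (simp add: R_def)
  define a where "a n = (\<Sum>\<beta>\<in>{\<beta>. deg \<beta> = n}. mnm x1 \<beta> *\<^sub>R c \<beta>)" for n
  have hs2: "((\<lambda>\<beta>. (s ^ deg \<beta> * mnm x1 \<beta>) *\<^sub>R c \<beta>) has_sum f ((t0 + s) *\<^sub>R x1)) UNIV"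
    if "\<bar>s\<bar> < R" for s
  proof -
    have inb: "(t0 + s) *\<^sub>R x1 \<in> ball (t0 *\<^sub>R x1) r"
      using that False r by (simp add: dist_norm R_def algebra_simps field_simps)
    have eq: "(\<Prod>i\<in>UNIV. (((t0 + s) *\<^sub>R x1)$i - (t0 *\<^sub>R x1)$i) ^ \<beta> i) = s ^ deg \<beta> * mnm x1 \<beta>" for \<beta>
      using mnm_scale[of s x1 \<beta>] by (simp add: mnm_def algebra_simps)
    from hs[OF inb] show ?thesis by (simp only: eq)
  qed
  have sums1: "(\<lambda>n. s ^ n *\<^sub>R a n) sums f ((t0 + s) *\<^sub>R x1)" if "\<bar>s\<bar> < R" for s
  proof -
    have "((\<lambda>n. \<Sum>\<beta>\<in>{\<beta>. deg \<beta> = n}. (s ^ deg \<beta> * mnm x1 \<beta>) *\<^sub>R c \<beta>) has_sum f ((t0 + s) *\<^sub>R x1)) UNIV"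
      by (rule has_sum_regroup[OF hs2[OF that]])
    moreover have "(\<Sum>\<beta>\<in>{\<beta>. deg \<beta> = n}. (s ^ deg \<beta> * mnm x1 \<beta>) *\<^sub>R c \<beta>) = s ^ n *\<^sub>R a n" for n
      by (simp add: a_def scaleR_sum_right)
    ultimately show ?thesis by (simp add: has_sum_imp_sums)
  qed
  have summ: "summable (\<lambda>n. norm (a n) * \<rho> ^ n)" if "0 \<le> \<rho>" "\<rho> < R" for \<rho>
  proof -
    have "(\<lambda>\<beta>. norm ((\<rho> ^ deg \<beta> * mnm x1 \<beta>) *\<^sub>R c \<beta>)) summable_on UNIV"
      using summable_norm_vec[of "\<lambda>\<beta>. (\<rho> ^ deg \<beta> * mnm x1 \<beta>) *\<^sub>R c \<beta>" UNIV] hs2[of \<rho>] that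
      by (auto simp: has_sum_iff simp del: norm_scaleR)
    then have "((\<lambda>n. \<Sum>\<beta>\<in>{\<beta>. deg \<beta> = n}. norm ((\<rho> ^ deg \<beta> * mnm x1 \<beta>) *\<^sub>R c \<beta>)) has_sum
               infsum (\<lambda>\<beta>. norm ((\<rho> ^ deg \<beta> * mnm x1 \<beta>) *\<^sub>R c \<beta>)) UNIV) UNIV"
      by (intro has_sum_regroup) (simp add: has_sum_iff)
    then have s1: "summable (\<lambda>n. \<Sum>\<beta>\<in>{\<beta>. deg \<beta> = n}. norm ((\<rho> ^ deg \<beta> * mnm x1 \<beta>) *\<^sub>R c \<beta>))"
      using has_sum_imp_sums sums_summable by blast
    show ?thesis
    proof (rule summable_comparison_test[OF _ s1], intro exI[of _ 0] allI impI)
      fix n :: nat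
      have "norm (norm (a n) * \<rho> ^ n) = norm (\<rho> ^ n *\<^sub>R a n)" using that by simp
      also have "\<rho> ^ n *\<^sub>R a n = (\<Sum>\<beta>\<in>{\<beta>. deg \<beta> = n}. (\<rho> ^ deg \<beta> * mnm x1 \<beta>) *\<^sub>R c \<beta>)"
        by (simp add: a_def scaleR_sum_right)
      also have "norm \<dots> \<le> (\<Sum>\<beta>\<in>{\<beta>. deg \<beta> = n}. norm ((\<rho> ^ deg \<beta> * mnm x1 \<beta>) *\<^sub>R c \<beta>))"
        by (rule norm_sum)
      finally show "norm (norm (a n) * \<rho> ^ n) \<le> (\<Sum>\<beta>\<in>{\<beta>. deg \<beta> = n}. norm ((\<rho> ^ deg \<beta> * mnm x1 \<beta>) *\<^sub>R c \<beta>))" .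
    qed
  qed
  define F where "F z = (\<chi> j. \<Sum>n. a n $ j * (z - of_real t0)^n)" for z
  have conv: "ereal R \<le> conv_radius (\<lambda>n. a n $ j)" for j
  proof (rule conv_radius_geI_ex')
    fix \<rho> :: real assume \<rho>: "0 < \<rho>" "ereal \<rho> < ereal R"
    have "summable (\<lambda>n. norm (a n $ j * of_real \<rho> ^ n))"
    proof (rule summable_comparison_test[OF _ summ[of \<rho>]], intro exI[of _ 0] allI impI)
      fix n :: nat
      show "norm (norm (a n $ j * of_real \<rho> ^ n)) \<le> norm (a n) * \<rho> ^ n"
        using \<rho> Finite_Cartesian_Product.norm_nth_le[of "a n" j] by (simp add: norm_mult norm_power mult_right_mono)
    qed (use \<rho> in auto)
    then show "summable (\<lambda>n. a n $ j * of_real \<rho> ^ n)" by (rule summable_norm_cancel)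
  qed
  show ?thesis
  proof (intro exI[of _ R] conjI R exI[of _ F] allI impI)
    fix j
    show "(\<lambda>z. F z $ j) holomorphic_on ball (of_real t0) R"
      unfolding F_def using powser_holo[OF conv[of j]] by simp
  next
    fix t assume t: "\<bar>t - t0\<bar> < R"
    have "F (of_real t) $ j = f (t *\<^sub>R x1) $ j" for j
    proof -
      have "(\<lambda>n. (((t - t0) ^ n) *\<^sub>R a n) $ j) sums (f ((t0 + (t - t0)) *\<^sub>R x1) $ j)"
        using bounded_linear.sums[OF bounded_linear_vec_nth sums1[OF t]] .
      moreover have "(((t - t0) ^ n) *\<^sub>R a n) $ j = a n $ j * (of_real t - of_real t0) ^ n" for n
      proof -
        have "(((t - t0) ^ n) *\<^sub>R a n) $ j = ((t - t0) ^ n) *\<^sub>R (a n $ j)" by (rule vector_scaleR_component)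
        also have "\<dots> = a n $ j * (of_real t - of_real t0) ^ n" by (simp add: scaleR_conv_of_real mult.commute)
        finally show ?thesis .
      qed
      ultimately have "(\<lambda>n. a n $ j * (of_real t - of_real t0) ^ n) sums (f (t *\<^sub>R x1) $ j)"
        by simp
      then show ?thesis unfolding F_def by (simp add: sums_iff)
    qed
    then show "F (of_real t) = f (t *\<^sub>R x1)" by (simp add: vec_eq_iff)
  qed
qed

lemma segment_identity:
  fixes g :: "real \<Rightarrow> complex"
  assumes loc: "\<And>t0. t0 \<in> {0..1} \<Longrightarrow> \<exists>R>0. \<exists>G. G holomorphic_on ball (complex_of_real t0) R \<and>
                    (\<forall>t. \<bar>t - t0\<bar> < R \<longrightarrow> G (of_real t) = g t)"
    and g1: "g 1 \<noteq> 0"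
  shows "\<exists>\<epsilon>>0. \<exists>c>0. \<exists>d::nat. \<forall>t. 0 < t \<and> t < \<epsilon> \<longrightarrow> c * t^d \<le> cmod (g t)"
proof -
  obtain R0 G0 where R0: "R0 > 0" and hol0: "G0 holomorphic_on ball 0 R0"
    and eq0: "\<And>t. \<bar>t\<bar> < R0 \<Longrightarrow> G0 (of_real t) = g t"
    using loc[of 0] by auto
  show ?thesis
  proof (cases "\<exists>w\<in>ball 0 R0. G0 w \<noteq> 0")
    case True
    have c0: "0 \<in> ball (0::complex) R0" using R0 by simp
    obtain r where r: "r > 0" "cball (0::complex) r \<subseteq> ball 0 R0" and hh0: "zor_poly G0 0 holomorphic_on cball 0 r"
      and fac00: "\<forall>w\<in>cball 0 r. G0 w = zor_poly G0 0 w * (w - 0) ^ nat (zorder G0 0) \<and> zor_poly G0 0 w \<noteq> 0"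
      using conjunct2[OF zorder_exist_zero[OF hol0 open_ball connected_ball c0 True]] by blast
    define h where "h = zor_poly G0 0"
    define d where "d = nat (zorder G0 0)"
    have hh: "h holomorphic_on cball 0 r" using hh0 by (simp add: h_def)
    have fac0: "\<forall>w\<in>cball 0 r. G0 w = h w * (w - 0) ^ d \<and> h w \<noteq> 0"
      using fac00 by (simp add: h_def d_def)
    have fac: "\<And>w. w \<in> cball 0 r \<Longrightarrow> G0 w = h w * (w - 0) ^ d \<and> h w \<noteq> 0"
      using fac0 by blast
    have "continuous_on (cball 0 r) (\<lambda>w. cmod (h w))"
      using holomorphic_on_imp_continuous_on[OF hh] by (intro continuous_intros)
    then obtain w0 where w0: "w0 \<in> cball 0 r" and min: "\<And>w. w \<in> cball 0 r \<Longrightarrow> cmod (h w0) \<le> cmod (h w)"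
      using continuous_attains_inf[of "cball 0 r" "\<lambda>w. cmod (h w)"] r by auto
    have cpos: "cmod (h w0) > 0" using fac[OF w0] by simp
    have key: "\<forall>t. 0 < t \<and> t < min r R0 \<longrightarrow> cmod (h w0) * t ^ d \<le> cmod (g t)"
    proof (intro allI impI)
      fix t :: real assume t: "0 < t \<and> t < min r R0"
      have tin: "complex_of_real t \<in> cball 0 r" using t by simp
      have "g t = G0 (of_real t)" using eq0[of t] t by simp
      also have "\<dots> = h (of_real t) * (of_real t) ^ d" using fac[OF tin] by simp
      finally have "cmod (g t) = cmod (h (of_real t)) * t ^ d"
        using t by (simp add: norm_mult norm_power)
      moreover have "cmod (h w0) * t ^ d \<le> cmod (h (of_real t)) * t ^ d"
        using min[OF tin] t by (intro mult_right_mono) auto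
      ultimately show "cmod (h w0) * t ^ d \<le> cmod (g t)" by simp
    qed
    show ?thesis
      apply (rule exI[of _ "min r R0"], rule conjI)
       apply (use r R0 in simp)
      apply (rule exI[of _ "cmod (h w0)"], rule conjI, rule cpos)
      apply (rule exI[of _ d])
      using key by blast
  next
    case False
    then have G0z: "\<And>w. w \<in> ball 0 R0 \<Longrightarrow> G0 w = 0" by auto
    define Z where "Z = {s. 0 \<le> s \<and> s \<le> 1 \<and> (\<forall>t. 0 \<le> t \<and> t \<le> s \<longrightarrow> g t = 0)}"
    define m0 where "m0 = min 1 (R0/2)"
    have m0: "m0 \<in> Z"
    proof -
      have "g t = 0" if "0 \<le> t" "t \<le> m0" for t
      proof -
        have "\<bar>t\<bar> < R0" using that R0 by (simp add: m0_def)
        then show ?thesis using eq0[of t] G0z[of "of_real t"] by simp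
      qed
      then show ?thesis using R0 by (auto simp: Z_def m0_def)
    qed
    have bdd: "bdd_above Z" by (auto simp: Z_def bdd_above_def)
    define s where "s = Sup Z"
    have "m0 \<le> s" unfolding s_def using m0 bdd by (rule cSup_upper)
    then have spos: "s > 0" using R0 by (simp add: m0_def)
    have s1: "s \<le> 1" unfolding s_def using m0 by (intro cSup_least) (auto simp: Z_def)
    have below: "g t = 0" if "0 \<le> t" "t < s" for t
    proof -
      obtain z where "z \<in> Z" "t < z" using \<open>t < s\<close> less_cSup_iff[of Z t] m0 bdd s_def by auto
      then show ?thesis using that by (auto simp: Z_def)
    qed
    obtain R1 G1 where R1: "R1 > 0" and hol1: "G1 holomorphic_on ball (of_real s) R1"
      and eq1: "\<And>t. \<bar>t - s\<bar> < R1 \<Longrightarrow> G1 (of_real t) = g t"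
      using loc[of s] spos s1 by auto
    define U where "U = complex_of_real ` {max 0 (s - R1) <..< s}"
    have G1z: "G1 w = 0" if "w \<in> ball (of_real s) R1" for w
    proof (rule analytic_continuation[OF hol1 open_ball connected_ball])
      show "U \<subseteq> ball (complex_of_real s) R1"
        by (auto simp: U_def dist_norm simp flip: of_real_diff)
      show "complex_of_real s \<in> ball (complex_of_real s) R1" using R1 by simp
      show "complex_of_real s islimpt U"
      proof (rule islimpt_approachable[THEN iffD2], intro allI impI)
        fix e :: real assume e: "e > 0"
        define t where "t = s - min e (min R1 s) / 2"
        have "t \<in> {max 0 (s - R1) <..< s}" using e R1 spos by (auto simp: t_def)
        moreover have "dist (complex_of_real t) (complex_of_real s) < e"
          using e R1 spos by (simp add: t_def dist_norm flip: of_real_diff)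
        moreover have "complex_of_real t \<noteq> complex_of_real s" using e R1 spos by (simp add: t_def)
        ultimately show "\<exists>x'\<in>U. x' \<noteq> complex_of_real s \<and> dist x' (complex_of_real s) < e"
          unfolding U_def by blast
      qed
      show "G1 z = 0" if "z \<in> U" for z
      proof -
        obtain t where t: "t \<in> {max 0 (s - R1) <..< s}" "z = of_real t" using \<open>z \<in> U\<close> by (auto simp: U_def)
        then have "\<bar>t - s\<bar> < R1" by auto
        then show ?thesis using eq1 below t by auto
      qed
      show "w \<in> ball (complex_of_real s) R1" by fact
    qed
    have above: "g t = 0" if "s \<le> t" "t < s + R1" for t
    proof -
      have "\<bar>t - s\<bar> < R1" using that by auto
      moreover then have "complex_of_real t \<in> ball (of_real s) R1"
        by (simp add: dist_norm abs_minus_commute flip: of_real_diff)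
      ultimately show ?thesis using eq1 G1z by force
    qed
    define m1 where "m1 = min 1 (s + R1/2)"
    have "m1 \<in> Z"
    proof -
      have "g t = 0" if "0 \<le> t" "t \<le> m1" for t
      proof (cases "t < s")
        case True then show ?thesis using below that by auto
      next
        case False then show ?thesis using above that R1 by (auto simp: m1_def)
      qed
      then show ?thesis using spos R1 by (auto simp: Z_def m1_def)
    qed
    then have "m1 \<le> s" unfolding s_def using bdd by (rule cSup_upper)
    then have "s = 1" using s1 R1 by (auto simp: m1_def)
    then have "g 1 = 0" using above[of 1] R1 by simp
    with g1 show ?thesis by simp
  qed
qed

lemma mnm_zero: "mnm (0::real^'m::finite) \<beta> = (if \<beta> = (\<lambda>_. 0) then 1 else 0)"
proof (cases "\<beta> = (\<lambda>_. 0)")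
  case True then show ?thesis by (simp add: mnm_def)
next
  case False
  then obtain i where "\<beta> i \<noteq> 0" by auto
  then have "(0::real) ^ \<beta> i = 0" by simp
  then have "mnm (0::real^'m) \<beta> = 0" unfolding mnm_def by (intro prod_zero) auto
  then show ?thesis using False by simp
qed

lemma deg_pos: "\<beta> \<noteq> (\<lambda>_. 0) \<Longrightarrow> deg (\<beta>::'m::finite \<Rightarrow> nat) \<ge> 1"
proof -
  assume "\<beta> \<noteq> (\<lambda>_. 0)"
  then obtain i where "\<beta> i \<noteq> 0" by auto
  then have "\<beta> i \<le> deg \<beta>" unfolding deg_def by (intro member_le_sum) auto
  then show ?thesis using \<open>\<beta> i \<noteq> 0\<close> by simp
qed

lemma mnm_bound:
  fixes x :: "real^'m::finite"
  assumes "norm x \<le> a"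
  shows "\<bar>mnm x \<beta>\<bar> \<le> a ^ deg \<beta>"
proof -
  have "\<bar>mnm x \<beta>\<bar> = (\<Prod>i\<in>UNIV. \<bar>x$i\<bar> ^ \<beta> i)" by (simp add: mnm_def abs_prod power_abs)
  also have "\<dots> \<le> (\<Prod>i\<in>UNIV. a ^ \<beta> i)"
    using assms component_le_norm_cart[of x]
    by (intro prod_mono conjI power_mono) (auto intro: order_trans)
  also have "\<dots> = a ^ deg \<beta>" by (simp add: deg_def power_sum)
  finally show ?thesis .
qed

lemma analytic_cont0:
  fixes f :: "real^'m::finite \<Rightarrow> complex^'k::finite"
  assumes "real_analytic_at f 0"
  shows "isCont f 0"
proof -
  obtain r and c :: "('m \<Rightarrow> nat) \<Rightarrow> complex^'k" where r: "r > 0" and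
    hs0: "\<And>x. x \<in> ball 0 r \<Longrightarrow>
          ((\<lambda>\<alpha>. (\<Prod>i\<in>UNIV. (x$i - (0::real^'m)$i) ^ (\<alpha> i)) *\<^sub>R c \<alpha>) has_sum f x) UNIV"
    using assms unfolding real_analytic_at_def by blast
  have hs: "((\<lambda>\<alpha>. mnm x \<alpha> *\<^sub>R c \<alpha>) has_sum f x) UNIV" if "norm x < r" for x
    using hs0[of x] that by (simp add: mnm_def)
  define s where "s = r / (real CARD('m) + 1)"
  have s: "s > 0" "s < r" using r by (auto simp: s_def field_simps)
  define y :: "real^'m" where "y = s *\<^sub>R (\<chi> i. 1)"
  have "norm y \<le> (\<Sum>i\<in>UNIV. \<bar>y$i\<bar>)" by (rule norm_le_l1_cart)
  also have "\<dots> = real CARD('m) * s" using s by (simp add: y_def)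
  also have "\<dots> < r" using r s by (simp add: s_def field_simps)
  finally have ny: "norm y < r" .
  have mny: "mnm y \<beta> = s ^ deg \<beta>" for \<beta>
    by (simp add: y_def mnm_scale) (simp add: mnm_def)
  have "(\<lambda>\<beta>. norm (mnm y \<beta> *\<^sub>R c \<beta>)) summable_on UNIV"
    using summable_norm_vec hs[OF ny] by (auto simp: has_sum_iff simp del: norm_scaleR)
  then have "(\<lambda>\<beta>. s ^ deg \<beta> * norm (c \<beta>)) summable_on UNIV"
    using s by (simp add: mny)
  then obtain M where M: "((\<lambda>\<beta>. s ^ deg \<beta> * norm (c \<beta>)) has_sum M) UNIV"
    by (auto simp: summable_on_def)
  have M0: "M \<ge> 0" by (rule has_sum_nonneg[OF M]) (use s in auto)
  have bound: "norm (f x - f 0) \<le> l * M" if "0 < l" "l \<le> 1" "norm x \<le> l * s" for x l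
  proof -
    have "l * s \<le> 1 * s" using that s by (intro mult_right_mono) auto
    then have nx: "norm x < r" using that s by linarith
    have h1: "((\<lambda>\<beta>. mnm x \<beta> *\<^sub>R c \<beta> + - (mnm 0 \<beta> *\<^sub>R c \<beta>)) has_sum (f x + - f 0)) UNIV"
      using hs[OF nx] hs[of 0] r by (intro has_sum_add) (auto simp: has_sum_uminus)
    have h2: "((\<lambda>\<beta>. l * (s ^ deg \<beta> * norm (c \<beta>))) has_sum (l * M)) UNIV"
      by (rule has_sum_cmult_right[OF M])
    have "norm (mnm x \<beta> *\<^sub>R c \<beta> + - (mnm 0 \<beta> *\<^sub>R c \<beta>)) \<le> l * (s ^ deg \<beta> * norm (c \<beta>))" for \<beta>
    proof (cases "\<beta> = (\<lambda>_. 0)")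
      case True
      then show ?thesis using that s by (simp add: mnm_def)
    next
      case False
      have d1: "deg \<beta> \<ge> 1" using deg_pos[OF False] .
      have "\<bar>mnm x \<beta>\<bar> \<le> (l * s) ^ deg \<beta>" by (rule mnm_bound[OF that(3)])
      also have "\<dots> = l ^ deg \<beta> * s ^ deg \<beta>" by (simp add: power_mult_distrib)
      also have "\<dots> \<le> l * s ^ deg \<beta>"
      proof (intro mult_right_mono)
        have "l ^ deg \<beta> = l * l ^ (deg \<beta> - 1)" using d1 by (cases "deg \<beta>") auto
        also have "\<dots> \<le> l * 1" using that by (intro mult_left_mono power_le_one) auto
        finally show "l ^ deg \<beta> \<le> l" by simp
      qed (use s in auto)
      finally have "\<bar>mnm x \<beta>\<bar> \<le> l * s ^ deg \<beta>" .
      then have "\<bar>mnm x \<beta>\<bar> * norm (c \<beta>) \<le> (l * s ^ deg \<beta>) * norm (c \<beta>)"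
        by (rule mult_right_mono) simp
      then show ?thesis using False
        by (simp add: mnm_zero mult.assoc)
    qed
    then have "norm (f x + - f 0) \<le> l * M"
      by (intro norm_infsum_le[OF h1 h2])
    then show ?thesis by simp
  qed
  show ?thesis
    unfolding continuous_at_eps_delta
  proof (intro allI impI)
    fix e :: real assume e: "e > 0"
    define l where "l = min 1 (e / (M + 1))"
    have l: "0 < l" "l \<le> 1" using e M0 by (auto simp: l_def)
    have lM: "l * M < e"
    proof -
      have "l * M \<le> e / (M + 1) * M" using M0 by (intro mult_right_mono) (auto simp: l_def)
      also have "\<dots> < e" using e M0 by (simp add: field_simps)
      finally show ?thesis .
    qed
    show "\<exists>d>0. \<forall>x'. dist x' 0 < d \<longrightarrow> dist (f x') (f 0) < e"
    proof (intro exI[of _ "l * s"] conjI allI impI)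
      show "l * s > 0" using l s by simp
      fix x' :: "real^'m" assume "dist x' 0 < l * s"
      then have "norm x' \<le> l * s" by simp
      from bound[OF l this] lM show "dist (f x') (f 0) < e" by (simp add: dist_norm)
    qed
  qed
qed

lemma det_holo:
  fixes M :: "complex \<Rightarrow> complex^'n::finite^'n"
  assumes "\<And>i j. (\<lambda>z. M z $ i $ j) holomorphic_on S"
  shows "(\<lambda>z. det (M z)) holomorphic_on S"
  unfolding det_def by (intro holomorphic_intros assms)

lemma det_cont:
  fixes M :: "'a::t2_space \<Rightarrow> complex^'n::finite^'n"
  assumes "\<And>i j. continuous (at a) (\<lambda>x. M x $ i $ j)"
  shows "continuous (at a) (\<lambda>x. det (M x))"
  unfolding det_def by (intro continuous_intros assms)

lemma prod_diff_bound:
  fixes a b :: "'i \<Rightarrow> complex"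
  assumes "finite S" "M \<ge> 1"
    and "\<And>i. i \<in> S \<Longrightarrow> cmod (a i) \<le> M" "\<And>i. i \<in> S \<Longrightarrow> cmod (b i) \<le> M"
    and "\<And>i. i \<in> S \<Longrightarrow> cmod (a i - b i) \<le> e"
  shows "cmod (prod a S - prod b S) \<le> real (card S) * M ^ card S * e"
  using assms(1,3-5)
proof (induction S rule: finite_induct)
  case empty then show ?case by simp
next
  case (insert x S)
  have e0: "e \<ge> 0" using insert.prems(3)[of x] by (meson insertI1 norm_ge_zero order_trans)
  have IH: "cmod (prod a S - prod b S) \<le> real (card S) * M ^ card S * e"
    using insert by auto
  have pb: "cmod (prod b S) \<le> M ^ card S"
  proof -
    have "cmod (prod b S) = (\<Prod>i\<in>S. cmod (b i))" by (simp add: prod_norm)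
    also have "\<dots> \<le> (\<Prod>i\<in>S. M)" using insert.prems by (intro prod_mono) auto
    finally show ?thesis by simp
  qed
  have "prod a (insert x S) - prod b (insert x S) = a x * (prod a S - prod b S) + (a x - b x) * prod b S"
    using insert by (simp add: algebra_simps)
  then have "cmod (prod a (insert x S) - prod b (insert x S)) \<le> cmod (a x) * cmod (prod a S - prod b S) + cmod (a x - b x) * cmod (prod b S)"
    by (metis norm_mult norm_triangle_ineq)
  also have "\<dots> \<le> M * (real (card S) * M ^ card S * e) + e * M ^ card S"
    using insert.prems IH pb e0 assms(2)
    by (intro add_mono mult_mono) auto
  also have "\<dots> \<le> real (card (insert x S)) * M ^ card (insert x S) * e"
  proof -
    have "e * M ^ card S \<le> e * (M * M ^ card S)"
      using e0 assms(2) by (intro mult_left_mono) (auto simp: mult_le_cancel_right1)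
    then show ?thesis using insert by (simp add: algebra_simps)
  qed
  finally show ?case .
qed

lemma det_diff_bound:
  fixes A B :: "complex^'n::finite^'n"
  assumes "M \<ge> 1" "\<And>i j. cmod (A$i$j) \<le> M" "\<And>i j. cmod (B$i$j) \<le> M"
    and "\<And>i j. cmod (A$i$j - B$i$j) \<le> e"
  shows "cmod (det A - det B) \<le> real (card {p. p permutes (UNIV::'n set)}) * (real CARD('n) * M ^ CARD('n) * e)"
proof -
  let ?P = "{p. p permutes (UNIV::'n set)}"
  have "det A - det B = (\<Sum>p\<in>?P. of_int (sign p) * ((\<Prod>i\<in>UNIV. A$i$p i) - (\<Prod>i\<in>UNIV. B$i$p i)))"
    unfolding det_def by (simp add: sum_subtractf algebra_simps)
  also have "cmod \<dots> \<le> (\<Sum>p\<in>?P. cmod (of_int (sign p) * ((\<Prod>i\<in>UNIV. A$i$p i) - (\<Prod>i\<in>UNIV. B$i$p i))))"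
    by (rule norm_sum)
  also have "\<dots> \<le> (\<Sum>p\<in>?P. real CARD('n) * M ^ CARD('n) * e)"
  proof (rule sum_mono)
    fix p assume "p \<in> ?P"
    have "cmod (of_int (sign p) :: complex) = 1" by (simp add: sign_def)
    then have "cmod (of_int (sign p) * ((\<Prod>i\<in>UNIV. A$i$p i) - (\<Prod>i\<in>UNIV. B$i$p i)))
             = cmod ((\<Prod>i\<in>UNIV. A$i$p i) - (\<Prod>i\<in>UNIV. B$i$p i))" by (simp add: norm_mult)
    also have "\<dots> \<le> real (card (UNIV::'n set)) * M ^ card (UNIV::'n set) * e"
      by (rule prod_diff_bound) (use assms in auto)
    finally show "cmod (of_int (sign p) * ((\<Prod>i\<in>UNIV. A$i$p i) - (\<Prod>i\<in>UNIV. B$i$p i))) \<le> real CARD('n) * M ^ CARD('n) * e" .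
  qed
  also have "\<dots> = real (card ?P) * (real CARD('n) * M ^ CARD('n) * e)" by simp
  finally show ?thesis .
qed

lemma span_dim_witness:
  fixes v :: "'a \<Rightarrow> real^'m::finite \<Rightarrow> complex^'k::finite"
  assumes "n \<le> span_dim v A x"
  shows "\<exists>I::'k set. \<exists>al. card I = n \<and> al ` I \<subseteq> A \<and> inj_on (\<lambda>l. v (al l) x) I \<and>
           vec.independent ((\<lambda>l. v (al l) x) ` I)"
proof -
  let ?V = "(\<lambda>\<alpha>. v \<alpha> x) ` A"
  obtain B where B: "B \<subseteq> ?V" "vec.independent B" "?V \<subseteq> vec.span B" "card B = vec.dim ?V"
    by (rule vec.basis_exists)
  have "n \<le> card B" using assms B(4) by (simp add: span_dim_def vec.dim_span)
  then obtain B' where B': "B' \<subseteq> B" "card B' = n" by (metis obtain_subset_with_card_n)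
  have iB': "vec.independent B'" using B(2) B'(1) by (rule vec.independent_mono)
  have fB': "finite B'" using vec.finiteI_independent[OF iB'] .
  have "card B' \<le> vec.dim (UNIV :: (complex^'k) set)"
    by (rule vec.independent_card_le_dim[OF _ iB']) simp
  also have "\<dots> \<le> CARD('k)" by (rule dim_subset_UNIV_cart_gen)
  finally have "n \<le> card (UNIV :: 'k set)" using B'(2) by simp
  then obtain I :: "'k set" where I: "I \<subseteq> UNIV" "card I = n" by (metis obtain_subset_with_card_n)
  have fI: "finite I" by simp
  obtain e where e: "bij_betw e I B'" using finite_same_card_bij[OF fI fB'] I B'(2) by auto
  define al where "al l = (SOME \<alpha>. \<alpha> \<in> A \<and> v \<alpha> x = e l)" for l
  have al: "al l \<in> A \<and> v (al l) x = e l" if "l \<in> I" for l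
  proof -
    have "e l \<in> ?V" using e that B'(1) B(1) bij_betwE by blast
    then have "\<exists>\<alpha>. \<alpha> \<in> A \<and> v \<alpha> x = e l" by auto
    then show ?thesis unfolding al_def by (rule someI_ex)
  qed
  have img: "(\<lambda>l. v (al l) x) ` I = B'"
  proof -
    have "(\<lambda>l. v (al l) x) ` I = e ` I" by (rule image_cong) (auto simp: al)
    then show ?thesis using bij_betw_imp_surj_on[OF e] by simp
  qed
  have inj: "inj_on (\<lambda>l. v (al l) x) I"
    using bij_betw_imp_inj_on[OF e] inj_on_cong[of I "\<lambda>l. v (al l) x" e] al by simp
  show ?thesis using I al img inj iB' by (intro exI[of _ I] exI[of _ al]) auto
qed

lemma span_dim_lower:
  fixes v :: "'a \<Rightarrow> real^'m::finite \<Rightarrow> complex^'k::finite"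
  assumes "det (gmat I W (\<lambda>l. v (al l) x)) \<noteq> 0" "al ` I \<subseteq> A"
  shows "card I \<le> span_dim v A x"
proof -
  from gmat_indep[OF assms(1)] have inj: "inj_on (\<lambda>l. v (al l) x) I"
    and ind: "vec.independent ((\<lambda>l. v (al l) x) ` I)" by auto
  have sub: "(\<lambda>l. v (al l) x) ` I \<subseteq> vec.span ((\<lambda>\<alpha>. v \<alpha> x) ` A)"
    using assms(2) by (auto intro: vec.span_base)
  have "card ((\<lambda>l. v (al l) x) ` I) \<le> vec.dim (vec.span ((\<lambda>\<alpha>. v \<alpha> x) ` A))"
    by (rule vec.independent_card_le_dim[OF sub ind])
  then show ?thesis using card_image[OF inj] by (simp add: span_dim_def)
qed

lemma gmat_out_entry:
  assumes "\<not> (k \<in> I \<and> l \<in> I)"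
  shows "gmat I W U $ k $ l = (if k = l then 1 else 0)"
  unfolding gmat_def vec_lambda_beta by (rule if_not_P[OF assms])

lemma gmat_entry_cont:
  fixes U :: "'k::finite \<Rightarrow> 'x::t2_space \<Rightarrow> complex^'k"
  assumes "\<And>l. l \<in> I \<Longrightarrow> isCont (U l) a"
  shows "continuous (at a) (\<lambda>x. gmat I W (\<lambda>l. U l x) $ k $ l)"
proof (cases "k \<in> I \<and> l \<in> I")
  case True
  then have "(\<lambda>x. gmat I W (\<lambda>l. U l x) $ k $ l) = (\<lambda>x. \<Sum>j\<in>UNIV. cnj (W k $ j) * (U l x $ j))"
    by (simp add: gmat_def)
  moreover have "continuous (at a) (\<lambda>x. \<Sum>j\<in>UNIV. cnj (W k $ j) * (U l x $ j))"
    using assms True by (intro continuous_intros) auto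
  ultimately show ?thesis by simp
next
  case False
  then show ?thesis by (simp add: gmat_out_entry)
qed

lemma gmat_entry_bound:
  fixes U :: "'k::finite \<Rightarrow> complex^'k"
  assumes "\<And>l. l \<in> I \<Longrightarrow> norm (U l) \<le> Bu" "Bu \<ge> 0"
  shows "cmod (gmat I W U $ k $ l) \<le> (\<Sum>k\<in>UNIV. \<Sum>j\<in>UNIV. cmod (W k $ j)) * Bu + 1"
proof (cases "k \<in> I \<and> l \<in> I")
  case True
  have "cmod (gmat I W U $ k $ l) = cmod (\<Sum>j\<in>UNIV. cnj (W k $ j) * (U l $ j))"
    using True by (simp add: gmat_def)
  also have "\<dots> \<le> (\<Sum>j\<in>UNIV. cmod (cnj (W k $ j) * (U l $ j)))" by (rule norm_sum)
  also have "\<dots> \<le> (\<Sum>j\<in>UNIV. cmod (W k $ j) * Bu)"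
  proof (rule sum_mono)
    fix j
    have "cmod (U l $ j) \<le> Bu"
      using Finite_Cartesian_Product.norm_nth_le[of "U l" j] assms(1)[of l] True by simp
    then show "cmod (cnj (W k $ j) * (U l $ j)) \<le> cmod (W k $ j) * Bu"
      by (simp add: norm_mult mult_left_mono)
  qed
  also have "\<dots> = (\<Sum>j\<in>UNIV. cmod (W k $ j)) * Bu" by (simp add: sum_distrib_right)
  also have "\<dots> \<le> (\<Sum>k\<in>UNIV. \<Sum>j\<in>UNIV. cmod (W k $ j)) * Bu"
    using assms(2) by (intro mult_right_mono member_le_sum) (auto intro: sum_nonneg)
  finally show ?thesis by simp
next
  case False
  have "cmod (gmat I W U $ k $ l) \<le> 1" using False by (simp add: gmat_out_entry)
  moreover have "0 \<le> (\<Sum>k\<in>UNIV. \<Sum>j\<in>UNIV. cmod (W k $ j)) * Bu"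
    using assms(2) by (intro mult_nonneg_nonneg sum_nonneg) auto
  ultimately show ?thesis by linarith
qed

lemma gmat_diff_bound:
  fixes U U' :: "'k::finite \<Rightarrow> complex^'k"
  assumes "\<And>l. l \<in> I \<Longrightarrow> norm (U l - U' l) \<le> eu" "eu \<ge> 0"
  shows "cmod (gmat I W U $ k $ l - gmat I W U' $ k $ l) \<le> (\<Sum>k\<in>UNIV. \<Sum>j\<in>UNIV. cmod (W k $ j)) * eu"
proof (cases "k \<in> I \<and> l \<in> I")
  case True
  have "gmat I W U $ k $ l - gmat I W U' $ k $ l = (\<Sum>j\<in>UNIV. cnj (W k $ j) * ((U l - U' l) $ j))"
    using True by (simp add: gmat_def sum_subtractf right_diff_distrib)
  then have "cmod (gmat I W U $ k $ l - gmat I W U' $ k $ l) = cmod (\<Sum>j\<in>UNIV. cnj (W k $ j) * ((U l - U' l) $ j))"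
    by simp
  also have "\<dots> \<le> (\<Sum>j\<in>UNIV. cmod (cnj (W k $ j) * ((U l - U' l) $ j)))" by (rule norm_sum)
  also have "\<dots> \<le> (\<Sum>j\<in>UNIV. cmod (W k $ j) * eu)"
  proof (rule sum_mono)
    fix j
    have "cmod ((U l - U' l) $ j) \<le> eu"
      using Finite_Cartesian_Product.norm_nth_le[of "U l - U' l" j] assms(1)[of l] True by simp
    then show "cmod (cnj (W k $ j) * ((U l - U' l) $ j)) \<le> cmod (W k $ j) * eu"
      by (simp add: norm_mult mult_left_mono)
  qed
  also have "\<dots> = (\<Sum>j\<in>UNIV. cmod (W k $ j)) * eu" by (simp add: sum_distrib_right)
  also have "\<dots> \<le> (\<Sum>k\<in>UNIV. \<Sum>j\<in>UNIV. cmod (W k $ j)) * eu"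
    using assms(2) by (intro mult_right_mono member_le_sum) (auto intro: sum_nonneg)
  finally show ?thesis .
next
  case False
  then show ?thesis using assms(2) by (simp add: gmat_out_entry sum_nonneg)
qed

theorem lemma4p3:
  fixes v :: "'a \<Rightarrow> real^'m \<Rightarrow> complex^'k" and A :: "'a set" and D :: "(real^'m) set"
  assumes "open D" and "0 \<in> D"
    and "\<forall>\<alpha>\<in>A. real_analytic_on (v \<alpha>) D"
    and "dim_nonconstant_near_0 v A D"
  shows "\<exists>\<kappa>::nat. \<kappa> > 1 \<and>
    (\<forall>(v' :: 'a \<Rightarrow> real^'m \<Rightarrow> complex^'k) D'.
       open D' \<longrightarrow> 0 \<in> D' \<longrightarrow> (\<forall>\<alpha>\<in>A. real_analytic_on (v' \<alpha>) D') \<longrightarrow>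
       (\<forall>\<alpha>\<in>A. \<exists>C r. r > 0 \<and>
          (\<forall>x\<in>ball 0 r \<inter> D \<inter> D'. norm (v' \<alpha> x - v \<alpha> x) \<le> C * norm x ^ \<kappa>)) \<longrightarrow>
       dim_nonconstant_near_0 v' A D')"
proof -
  obtain \<rho> where \<rho>: "\<rho> > 0" "ball 0 \<rho> \<subseteq> D" using assms(1,2) open_contains_ball by blast
  define r0 where "r0 = span_dim v A 0"
  have anat: "real_analytic_at (v \<alpha>) x" if "\<alpha> \<in> A" "x \<in> D" for \<alpha> x
    using assms(3) that unfolding real_analytic_on_def by blast
  have cont0: "isCont (v \<alpha>) 0" if "\<alpha> \<in> A" for \<alpha>
    using analytic_cont0 anat[OF that assms(2)] by blast
  obtain I0 :: "'k set" and al0 where I0: "card I0 = r0" "al0 ` I0 \<subseteq> A"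
    "inj_on (\<lambda>l. v (al0 l) 0) I0" "vec.independent ((\<lambda>l. v (al0 l) 0) ` I0)"
    using span_dim_witness[of r0 v A 0] r0_def by auto
  define W0 where "W0 l = v (al0 l) 0" for l
  have detN0: "det (gmat I0 W0 (\<lambda>l. v (al0 l) 0)) \<noteq> 0"
    using gmat_self[of W0 I0] I0 unfolding W0_def by simp
  have contN: "isCont (\<lambda>x. det (gmat I0 W0 (\<lambda>l. v (al0 l) x))) 0"
    by (rule det_cont, rule gmat_entry_cont) (use cont0 I0(2) in auto)
  obtain \<rho>1 where \<rho>1: "\<rho>1 > 0" and lsc: "\<And>x. norm x < \<rho>1 \<Longrightarrow> r0 \<le> span_dim v A x"
  proof -
    let ?e = "cmod (det (gmat I0 W0 (\<lambda>l. v (al0 l) 0)))"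
    have "?e > 0" using detN0 by simp
    with contN obtain d where d: "d > 0"
      "\<And>x'. dist x' 0 < d \<Longrightarrow> dist (det (gmat I0 W0 (\<lambda>l. v (al0 l) x'))) (det (gmat I0 W0 (\<lambda>l. v (al0 l) 0))) < ?e"
      unfolding continuous_at_eps_delta by blast
    have "r0 \<le> span_dim v A x" if "norm x < d" for x
    proof -
      have "det (gmat I0 W0 (\<lambda>l. v (al0 l) x)) \<noteq> 0"
        using d(2)[of x] that by (auto simp: dist_norm)
      from span_dim_lower[where v=v and al=al0 and x=x and I=I0 and W=W0 and A=A, OF this I0(2)] show ?thesis using I0(1) by simp
    qed
    then show ?thesis using that d(1) by blast
  qed
  obtain x1 where x1: "x1 \<in> ball 0 \<rho>" "r0 < span_dim v A x1"
  proof -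
    have "open (ball (0::real^'m) (min \<rho> \<rho>1))" "0 \<in> ball (0::real^'m) (min \<rho> \<rho>1)"
      "ball 0 (min \<rho> \<rho>1) \<subseteq> D" using \<rho> \<rho>1 by auto
    then obtain x y where xy: "x \<in> ball 0 (min \<rho> \<rho>1)" "y \<in> ball 0 (min \<rho> \<rho>1)"
      "span_dim v A x \<noteq> span_dim v A y"
      using assms(4) unfolding dim_nonconstant_near_0_def by blast
    have "r0 \<le> span_dim v A x" "r0 \<le> span_dim v A y" using xy lsc by auto
    then show ?thesis using xy that by (cases "r0 < span_dim v A x") auto
  qed
  obtain I :: "'k set" and al where I: "card I = Suc r0" "al ` I \<subseteq> A"
    "inj_on (\<lambda>l. v (al l) x1) I" "vec.independent ((\<lambda>l. v (al l) x1) ` I)"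
    using span_dim_witness[of "Suc r0" v A x1] x1(2) by auto
  have Ine: "I \<noteq> {}" and fI: "finite I" using I(1) by auto
  define W where "W l = v (al l) x1" for l
  define g where "g t = det (gmat I W (\<lambda>l. v (al l) (t *\<^sub>R x1)))" for t
  have g1: "g 1 \<noteq> 0" using gmat_self[of W I] I unfolding g_def W_def by simp
  have loc: "\<exists>R>0. \<exists>G. G holomorphic_on ball (complex_of_real t0) R \<and>
               (\<forall>t. \<bar>t - t0\<bar> < R \<longrightarrow> G (of_real t) = g t)" if "t0 \<in> {0..1}" for t0
  proof -
    have inD: "t0 *\<^sub>R x1 \<in> D"
    proof -
      have "norm (t0 *\<^sub>R x1) = \<bar>t0\<bar> * norm x1" by simp
      also have "\<dots> \<le> 1 * norm x1" using that by (intro mult_right_mono) auto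
      finally show ?thesis using x1(1) \<rho>(2) by auto
    qed
    have ex: "\<forall>l\<in>I. \<exists>R>0. \<exists>F::complex \<Rightarrow> complex^'k. (\<forall>j. (\<lambda>z. F z $ j) holomorphic_on ball (of_real t0) R) \<and>
           (\<forall>t. \<bar>t - t0\<bar> < R \<longrightarrow> F (of_real t) = v (al l) (t *\<^sub>R x1))"
    proof
      fix l assume "l \<in> I"
      then have "real_analytic_at (v (al l)) (t0 *\<^sub>R x1)" using anat I(2) inD by auto
      then show "\<exists>R>0. \<exists>F::complex \<Rightarrow> complex^'k. (\<forall>j. (\<lambda>z. F z $ j) holomorphic_on ball (of_real t0) R) \<and>
           (\<forall>t. \<bar>t - t0\<bar> < R \<longrightarrow> F (of_real t) = v (al l) (t *\<^sub>R x1))"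
        by (rule ray_holo)
    qed
    then obtain RR where RR: "\<forall>l\<in>I. RR l > 0 \<and> (\<exists>F::complex \<Rightarrow> complex^'k. (\<forall>j. (\<lambda>z. F z $ j) holomorphic_on ball (of_real t0) (RR l)) \<and>
           (\<forall>t. \<bar>t - t0\<bar> < RR l \<longrightarrow> F (of_real t) = v (al l) (t *\<^sub>R x1)))"
      using bchoice[OF ex] by blast
    then have "\<forall>l\<in>I. \<exists>F::complex \<Rightarrow> complex^'k. (\<forall>j. (\<lambda>z. F z $ j) holomorphic_on ball (of_real t0) (RR l)) \<and>
           (\<forall>t. \<bar>t - t0\<bar> < RR l \<longrightarrow> F (of_real t) = v (al l) (t *\<^sub>R x1))" by blast
    from bchoice[OF this] obtain FF :: "'k \<Rightarrow> complex \<Rightarrow> complex^'k" where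
      FF: "\<forall>l\<in>I. (\<forall>j. (\<lambda>z. FF l z $ j) holomorphic_on ball (of_real t0) (RR l)) \<and>
           (\<forall>t. \<bar>t - t0\<bar> < RR l \<longrightarrow> FF l (of_real t) = v (al l) (t *\<^sub>R x1))" by blast
    define R where "R = Min (RR ` I)"
    have R: "R > 0" using RR fI Ine by (simp add: R_def)
    have RleI: "R \<le> RR l" if "l \<in> I" for l using fI that by (simp add: R_def)
    define M where "M z = ((\<chi> k l. if k \<in> I \<and> l \<in> I then (\<Sum>j\<in>UNIV. cnj (W k $ j) * (FF l z $ j))
                               else if k = l then 1 else 0) :: complex^'k^'k)" for z
    have holo: "(\<lambda>z. det (M z)) holomorphic_on ball (of_real t0) R"
    proof (rule det_holo)
      fix k l
      show "(\<lambda>z. M z $ k $ l) holomorphic_on ball (of_real t0) R"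
      proof (cases "k \<in> I \<and> l \<in> I")
        case True
        have "(\<lambda>z. FF l z $ j) holomorphic_on ball (of_real t0) R" for j
          using FF True holomorphic_on_subset[OF _ subset_ball[OF RleI[of l]]] by blast
        then have "(\<lambda>z. \<Sum>j\<in>UNIV. cnj (W k $ j) * (FF l z $ j)) holomorphic_on ball (of_real t0) R"
          by (intro holomorphic_intros) auto
        then show ?thesis using True by (simp add: M_def)
      next
        case False
        have "(\<lambda>z. M z $ k $ l) = (\<lambda>z. if k = l then 1 else 0)"
          by (rule ext) (simp only: M_def vec_lambda_beta if_not_P[OF False])
        then show ?thesis by simp
      qed
    qed
    have eq: "det (M (of_real t)) = g t" if "\<bar>t - t0\<bar> < R" for t
    proof -
      have FFt: "FF l (of_real t) = v (al l) (t *\<^sub>R x1)" if "l \<in> I" for l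
        using FF that RleI[OF that] \<open>\<bar>t - t0\<bar> < R\<close> by auto
      have "M (of_real t) = gmat I W (\<lambda>l. v (al l) (t *\<^sub>R x1))"
        unfolding M_def gmat_def by (simp add: FFt cong: if_cong)
      then show ?thesis by (simp add: g_def)
    qed
    show ?thesis using R holo eq by blast
  qed
  obtain \<epsilon> c d where \<epsilon>cd: "\<epsilon> > 0" "c > 0" "\<And>t. 0 < t \<Longrightarrow> t < \<epsilon> \<Longrightarrow> c * t ^ d \<le> cmod (g t)"
    using segment_identity[of g, OF loc g1] by blast
  show ?thesis
  proof (rule exI[of _ "d + 2"], rule conjI)
    show "1 < d + 2" by simp
    show "\<forall>(v' :: 'a \<Rightarrow> real^'m \<Rightarrow> complex^'k) D'.
       open D' \<longrightarrow> 0 \<in> D' \<longrightarrow> (\<forall>\<alpha>\<in>A. real_analytic_on (v' \<alpha>) D') \<longrightarrow>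
       (\<forall>\<alpha>\<in>A. \<exists>C r. r > 0 \<and>
          (\<forall>x\<in>ball 0 r \<inter> D \<inter> D'. norm (v' \<alpha> x - v \<alpha> x) \<le> C * norm x ^ (d + 2))) \<longrightarrow>
       dim_nonconstant_near_0 v' A D'"
    proof (intro allI impI)
      fix v' :: "'a \<Rightarrow> real^'m \<Rightarrow> complex^'k" and D' :: "(real^'m) set"
      assume D': "open D'" "0 \<in> D'" and an': "\<forall>\<alpha>\<in>A. real_analytic_on (v' \<alpha>) D'"
        and bd: "\<forall>\<alpha>\<in>A. \<exists>C r. r > 0 \<and>
          (\<forall>x\<in>ball 0 r \<inter> D \<inter> D'. norm (v' \<alpha> x - v \<alpha> x) \<le> C * norm x ^ (d + 2))"
      have same0: "span_dim v' A 0 = r0"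
      proof -
        have "v' \<alpha> 0 = v \<alpha> 0" if aA: "\<alpha> \<in> A" for \<alpha>
        proof -
          obtain C r where Cr: "r > 0" "\<forall>x\<in>ball 0 r \<inter> D \<inter> D'. norm (v' \<alpha> x - v \<alpha> x) \<le> C * norm x ^ (d + 2)"
            using bspec[OF bd aA] by blast
          have "(0::real^'m) \<in> ball 0 r \<inter> D \<inter> D'" using Cr(1) assms(2) D'(2) by simp
          then have "norm (v' \<alpha> 0 - v \<alpha> 0) \<le> C * norm (0::real^'m) ^ (d + 2)"
            using Cr(2) by (rule bspec[rotated])
          then show ?thesis by simp
        qed
        then have "(\<lambda>\<alpha>. v' \<alpha> 0) ` A = (\<lambda>\<alpha>. v \<alpha> 0) ` A" by (rule image_cong[OF refl])
        then show ?thesis by (simp add: span_dim_def r0_def)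
      qed
      have "\<forall>l\<in>I. \<exists>C r. r > 0 \<and> (\<forall>x\<in>ball 0 r \<inter> D \<inter> D'. norm (v' (al l) x - v (al l) x) \<le> C * norm x ^ (d + 2))"
        using bd I(2) by blast
      from bchoice[OF this] obtain CC where
        "\<forall>l\<in>I. \<exists>r. r > 0 \<and> (\<forall>x\<in>ball 0 r \<inter> D \<inter> D'. norm (v' (al l) x - v (al l) x) \<le> CC l * norm x ^ (d + 2))"
        by blast
      from bchoice[OF this] obtain RB where
        CR: "\<forall>l\<in>I. RB l > 0 \<and> (\<forall>x\<in>ball 0 (RB l) \<inter> D \<inter> D'. norm (v' (al l) x - v (al l) x) \<le> CC l * norm x ^ (d + 2))"
        by blast
      define Cm where "Cm = (\<Sum>l\<in>I. \<bar>CC l\<bar>)"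
      have Cm0: "Cm \<ge> 0" by (simp add: Cm_def sum_nonneg)
      have CmI: "\<bar>CC l\<bar> \<le> Cm" if "l \<in> I" for l
        unfolding Cm_def using fI that by (intro member_le_sum) auto
      define rm where "rm = Min (RB ` I)"
      have RBpos: "\<forall>l\<in>I. RB l > 0" using CR by blast
      have rm: "rm > 0" using RBpos fI Ine by (simp add: rm_def)
      have rmI: "rm \<le> RB l" if "l \<in> I" for l using fI that by (simp add: rm_def)
      have "\<forall>l\<in>I. \<exists>\<delta>>0. \<forall>x. dist x 0 < \<delta> \<longrightarrow> dist (v (al l) x) (v (al l) 0) < 1"
      proof
        fix l assume "l \<in> I"
        then have "isCont (v (al l)) 0" using cont0 I(2) by auto
        from this[unfolded continuous_at_eps_delta, rule_format, of 1]
        show "\<exists>\<delta>>0. \<forall>x. dist x 0 < \<delta> \<longrightarrow> dist (v (al l) x) (v (al l) 0) < 1" by simp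
      qed
      from bchoice[OF this] obtain DL where
        DL: "\<forall>l\<in>I. DL l > 0 \<and> (\<forall>x. dist x 0 < DL l \<longrightarrow> dist (v (al l) x) (v (al l) 0) < 1)" by blast
      define \<delta>c where "\<delta>c = Min (DL ` I)"
      have DLpos: "\<forall>l\<in>I. DL l > 0" using DL by blast
      have \<delta>c: "\<delta>c > 0" using DLpos fI Ine by (simp add: \<delta>c_def)
      have \<delta>cI: "\<delta>c \<le> DL l" if "l \<in> I" for l using fI that by (simp add: \<delta>c_def)
      define VBm where "VBm = (\<Sum>l\<in>I. norm (v (al l) 0) + 1)"
      have VBm0: "VBm \<ge> 0" by (simp add: VBm_def sum_nonneg)
      have vb: "norm (v (al l) y) \<le> VBm" if "l \<in> I" "norm y < \<delta>c" for l y
      proof -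
        have "dist (v (al l) y) (v (al l) 0) < 1" using DL that \<delta>cI[OF that(1)] by auto
        then have "norm (v (al l) y - v (al l) 0) < 1" by (simp add: dist_norm)
        moreover have "norm (v (al l) y) \<le> norm (v (al l) 0) + norm (v (al l) y - v (al l) 0)"
          by (rule norm_triangle_sub)
        ultimately have "norm (v (al l) y) \<le> norm (v (al l) 0) + 1" by linarith
        also have "\<dots> \<le> VBm" unfolding VBm_def using fI that(1)
          by (intro member_le_sum[of l I "\<lambda>l. norm (v (al l) 0) + 1"]) auto
        finally show ?thesis .
      qed
      define Wn where "Wn = (\<Sum>k\<in>UNIV. \<Sum>j\<in>UNIV. cmod (W k $ j))"
      have Wn0: "Wn \<ge> 0" by (simp add: Wn_def sum_nonneg)
      define Bd where "Bd = Wn * (VBm + 1) + 1"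
      have Bd1: "Bd \<ge> 1" using Wn0 VBm0 by (simp add: Bd_def)
      define Kq where "Kq = real (card {p. p permutes (UNIV::'k set)}) * (real CARD('k) * Bd ^ CARD('k) * Wn)"
      have Kq0: "Kq \<ge> 0" using Bd1 Wn0 by (simp add: Kq_def)
      define K1 where "K1 = Kq * Cm * norm x1 ^ (d + 2)"
      have K10: "K1 \<ge> 0" using Kq0 Cm0 by (simp add: K1_def)
      show "dim_nonconstant_near_0 v' A D'"
        unfolding dim_nonconstant_near_0_def
      proof (intro allI impI)
        fix U assume U: "open U" "0 \<in> U" "U \<subseteq> D'"
        obtain \<delta>U where \<delta>U: "\<delta>U > 0" "ball 0 \<delta>U \<subseteq> U" using U open_contains_ball by blast
        define q where "q = norm x1 + 1"
        have q: "q > 0" "norm x1 \<le> q" unfolding q_def using norm_ge_zero[of x1] by linarith+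
        define t where "t = min (min (\<epsilon>/2) (1/2)) (min (min (\<delta>U/(2*q)) (rm/(2*q)))
                              (min (\<delta>c/(2*q)) (min (1/(2*q*(Cm+1))) (c/(2*(K1+1))))))"
        have pos: "0 < \<epsilon>/2" "0 < (1::real)/2" "0 < \<delta>U/(2*q)" "0 < rm/(2*q)" "0 < \<delta>c/(2*q)"
          "0 < 1/(2*q*(Cm+1))" "0 < c/(2*(K1+1))"
          using \<epsilon>cd(1,2) q(1) \<delta>U(1) rm \<delta>c Cm0 K10 by auto
        have t0: "0 < t" unfolding t_def using pos by (simp only: min_less_iff_conj)
        have tle: "t \<le> \<epsilon>/2" "t \<le> 1/2" "t \<le> \<delta>U/(2*q)" "t \<le> rm/(2*q)" "t \<le> \<delta>c/(2*q)"
          "t \<le> 1/(2*q*(Cm+1))" "t \<le> c/(2*(K1+1))" unfolding t_def min_le_iff_disj by simp_all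
        define a where "a = t * norm x1"
        have a0: "0 \<le> a" using t0 by (simp add: a_def)
        have atq: "a \<le> t * q" using t0 q by (simp add: a_def mult_left_mono)
        have hq: "a < b" if "0 < b" "t \<le> b/(2*q)" for b
        proof -
          have "t * q \<le> b/(2*q) * q" using that q by (intro mult_right_mono) auto
          also have "\<dots> = b/2" using q by (simp add: field_simps)
          finally show ?thesis using atq that by linarith
        qed
        have aU: "a < \<delta>U" using hq[OF \<delta>U(1) tle(3)] .
        have arm: "a < rm" using hq[OF rm tle(4)] .
        have a\<delta>c: "a < \<delta>c" using hq[OF \<delta>c tle(5)] .
        have aC: "a \<le> 1/(Cm+1)"
        proof -
          have "t * q \<le> 1/(2*q*(Cm+1)) * q" using tle(6) q by (intro mult_right_mono) auto
          also have "\<dots> = 1/(2*(Cm+1))"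
          proof -
            have nz: "q * 2 + Cm * (q * 2) > 0"
              by (intro add_pos_nonneg mult_nonneg_nonneg) (use q Cm0 in auto)
            then show ?thesis using q Cm0 by (simp add: field_simps)
          qed
          also have "\<dots> \<le> 1/(Cm+1)" using Cm0 by (simp add: field_simps)
          finally show ?thesis using atq by linarith
        qed
        have a1: "a \<le> 1" using aC Cm0 order_trans[OF aC, of 1] by (simp add: field_simps)
        define x where "x = t *\<^sub>R x1"
        have nx: "norm x = a" using t0 by (simp add: x_def a_def)
        have xU: "x \<in> U" using nx aU \<delta>U(2) by auto
        have xD': "x \<in> D'" using xU U(3) by auto
        have xD: "x \<in> D"
        proof -
          have "a \<le> 1 * norm x1" unfolding a_def using tle(2) by (intro mult_right_mono) auto
          then show ?thesis using nx x1(1) \<rho>(2) by auto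
        qed
        define eu where "eu = Cm * a ^ (d + 2)"
        have eu0: "eu \<ge> 0" using Cm0 a0 by (simp add: eu_def)
        have eu1: "eu \<le> 1"
        proof -
          have "a ^ (d + 1) \<le> 1" using a0 a1 by (rule power_le_one)
          then have "a * a ^ (d + 1) \<le> a * 1" using a0 by (rule mult_left_mono)
          then have "a ^ (d + 2) \<le> a" by simp
          then have "eu \<le> Cm * a" unfolding eu_def using Cm0 by (intro mult_left_mono)
          also have "\<dots> \<le> Cm * (1/(Cm+1))" using aC Cm0 by (intro mult_left_mono)
          also have "\<dots> \<le> 1" using Cm0 by (simp add: field_simps)
          finally show ?thesis .
        qed
        have diffl: "norm (v (al l) x - v' (al l) x) \<le> eu" if "l \<in> I" for l
        proof -
          have "x \<in> ball 0 (RB l) \<inter> D \<inter> D'" using nx arm rmI[OF that] xD xD' by auto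
          then have "norm (v' (al l) x - v (al l) x) \<le> CC l * norm x ^ (d + 2)" using CR that by blast
          also have "\<dots> \<le> \<bar>CC l\<bar> * a ^ (d + 2)" using nx a0 by (simp add: mult_right_mono)
          also have "\<dots> \<le> Cm * a ^ (d + 2)" using CmI[OF that] a0 by (intro mult_right_mono) auto
          finally show ?thesis by (simp add: eu_def norm_minus_commute)
        qed
        have vbx: "norm (v (al l) x) \<le> VBm + 1" if "l \<in> I" for l
        proof -
          have "norm (v (al l) x) \<le> VBm" using vb[OF that] nx a\<delta>c by simp
          then show ?thesis by simp
        qed
        have v'bx: "norm (v' (al l) x) \<le> VBm + 1" if "l \<in> I" for l
        proof -
          have "norm (v' (al l) x) \<le> norm (v (al l) x) + norm (v' (al l) x - v (al l) x)"
            by (rule norm_triangle_sub)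
          moreover have "norm (v' (al l) x - v (al l) x) \<le> eu" using diffl[OF that] by (simp add: norm_minus_commute)
          moreover have "norm (v (al l) x) \<le> VBm" using vb[OF that] nx a\<delta>c by simp
          ultimately show ?thesis using eu1 by linarith
        qed
        let ?A = "gmat I W (\<lambda>l. v (al l) x)"
        let ?B = "gmat I W (\<lambda>l. v' (al l) x)"
        have bA: "cmod (?A $ i $ j) \<le> Bd" for i j
          unfolding Bd_def Wn_def by (rule gmat_entry_bound) (use vbx VBm0 in auto)
        have bB: "cmod (?B $ i $ j) \<le> Bd" for i j
          unfolding Bd_def Wn_def by (rule gmat_entry_bound) (use v'bx VBm0 in auto)
        have bAB: "cmod (?A $ i $ j - ?B $ i $ j) \<le> Wn * eu" for i j
          unfolding Wn_def by (rule gmat_diff_bound) (use diffl eu0 in auto)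
        have "cmod (det ?A - det ?B) \<le> real (card {p. p permutes (UNIV::'k set)}) * (real CARD('k) * Bd ^ CARD('k) * (Wn * eu))"
          by (rule det_diff_bound[OF Bd1 bA bB bAB])
        also have "\<dots> = K1 * t ^ (d + 2)"
          by (simp add: Kq_def K1_def eu_def a_def power_mult_distrib mult_ac)
        finally have dAB: "cmod (det ?A - det ?B) \<le> K1 * t ^ (d + 2)" .
        have gA: "g t = det ?A" by (simp add: g_def x_def)
        have low: "c * t ^ d \<le> cmod (det ?A)" using \<epsilon>cd(3)[of t] t0 tle(1) \<epsilon>cd(1) gA by simp
        have "K1 * t ^ (d + 2) < c * t ^ d"
        proof -
          have "t ^ (d + 2) = t ^ d * (t * t)" by (simp add: power_add power2_eq_square)
          then have "K1 * t ^ (d + 2) = t ^ d * (K1 * t * t)" by (simp add: mult_ac)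
          also have "\<dots> \<le> t ^ d * (K1 * t * 1)" using t0 tle(2) K10
            by (intro mult_left_mono) auto
          also have "\<dots> < t ^ d * c"
          proof (rule mult_strict_left_mono)
            have "K1 * t \<le> (K1 + 1) * t" using t0 by simp
            also have "\<dots> \<le> (K1 + 1) * (c / (2 * (K1 + 1)))" using tle(7) K10 by (intro mult_left_mono) auto
            also have "\<dots> = c / 2" using K10 by (simp add: field_simps)
            also have "\<dots> < c" using \<epsilon>cd(2) by simp
            finally show "K1 * t * 1 < c" by simp
          qed (use t0 in simp)
          finally show ?thesis by (simp add: mult.commute)
        qed
        then have "cmod (det ?B) > 0"
          using low dAB norm_triangle_ineq2[of "det ?A" "det ?B"] by linarith
        then have "det ?B \<noteq> 0" by simp
        from span_dim_lower[where v=v' and al=al and x=x and I=I and W=W and A=A, OF this I(2)]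
        have "Suc r0 \<le> span_dim v' A x" using I(1) by simp
        then have "span_dim v' A x \<noteq> span_dim v' A 0" using same0 by simp
        then show "\<exists>x\<in>U. \<exists>y\<in>U. span_dim v' A x \<noteq> span_dim v' A y" using xU U(2) by blast
      qed
    qed
  qed
qed

end
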